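(* In the standing setting, let $(A,B,R,\sigma)$ be a normalized context. If $(\chi_X,\chi_Y)\in\mathcal{FC}$ with $\varnothing\ne X\subsetneq B$ and $\varnothing\ne Y\subsetneq A$, then $(\chi_{B\setminus X},\chi_{A\setminus Y})\in\mathcal{FC}$.
   Context: Adjoint triple: for posets $(P_1,\le_1),(P_2,\le_2),(P_3,\le_3)$, maps $\&\colon P_1\times P_2\to P_3$, $\swarrow\colon P_3\times P_2\to P_1$, $\nwarrow\colon P_3\times P_1\to P_2$ with $x\le_1 z\swarrow y \iff x\,\&\,y\le_3 z \iff y\le_2 z\nwarrow x$ for all $x,y,z$. For lower-bounded posets, $\&$ has zero-divisors if there are $x\ne\bot_1$, $y\neq\bot_2$ with $x\,\&\,y=\bot_3$. Standing setting: $(L_1,\preceq_1,\bot_1,\top_1)$ and $(L_2,\preceq_2,\bot_2,\top_2)$ are complete lattices and $(P,\le,\bot,\top)$ is a bounded poset. A multi-adjoint frame consists of adjoint triples $(\&_i,\swarrow^i,\nwarrow_i)$, $i=1,\dots,n$, with respect to $L_1,L_2,P$; a property-oriented frame consists of adjoint triples $(\&^p_j,\swarrow_p^j,\nwarrow^p_j)$, $j=1,\dots,m$, with respect to $P,L_2,L_1$; an object-oriented frame consists of adjoint triples $(\&^o_k,\swarrow_o^k,\nwarrow^o_k)$, $k=1,\dots,s$, with respect to $L_1,P,L_2$. All conjunctors $\&_i,\&^p_j,\&^o_k$ have no zero-divisors. A context $(A,B,R,\sigma)$ consists of non-empty sets $A,B$, $R\colon A\times B\to P$, and maps $\sigma,\sigma_p,\sigma_o$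 from $A\times B$ to the index sets of the three frames. It is normalized if every $a\in A$ has $b_1,b_2\in B$ with $R(a,b_1)\ne\bot$, $R(a,b_2)=\bot$, and every $b\in B$ has $a_1,a_2\in A$ with $R(a_1,b)\neq\bot$, $R(a_2,b)=\bot$. Fuzzy necessity operators: $g^{\uparrow_N}(a)=\inf\{g(b)\swarrow_o^{\sigma_o(a,b)}R(a,b)\mid b\in B\}$ for $g\in L_2^B$, and $f^{\downarrow^N}(b)=\inf\{f(a)\nwarrow^p_{\sigma_p(a,b)}R(a,b)\mid a\in A\}$ for $f\in L_1^A$. $\mathcal F_N=\{(g,f)\mid g\in L_2^B,\ f\in L_1^A,\ g^{\uparrow_N}=f,\ f^{\downarrow^N}=g\}$. For $X\subseteq B$, $\chi_X\in L_2^B$ takes value $\top_2$ on $X$ and $\bot_2$ elsewhere; for $Y\subseteq A$, $\chi_Y\in L_1^A$ takes value $\top_1$ on $Y$ and $\bot_1$ elsewhere. $\mathcal{FC}=\{(\chi_X,\chi_Y)\in\mathcal F_N\mid \varnothing\ne X\subsetneq B,\ \varnothing\neq Y\subsetneq A\}$. *)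

theory Defs
  imports Main
begin

definition adjoint_triple ::
  "('p1::order \<Rightarrow> 'p2::order \<Rightarrow> 'p3::order) \<Rightarrow> ('p3 \<Rightarrow> 'p2 \<Rightarrow> 'p1) \<Rightarrow> ('p3 \<Rightarrow> 'p1 \<Rightarrow> 'p2) \<Rightarrow> bool"
  where "adjoint_triple cj sw nw \<longleftrightarrow>
    (\<forall>x y z. (x \<le> sw z y \<longleftrightarrow> cj x y \<le> z) \<and> (cj x y \<le> z \<longleftrightarrow> y \<le> nw z x))"

definition has_zero_divisors ::
  "('p1::order_bot \<Rightarrow> 'p2::order_bot \<Rightarrow> 'p3::order_bot) \<Rightarrow> bool"
  where "has_zero_divisors cj \<longleftrightarrow> (\<exists>x y. x \<noteq> bot \<and> y \<noteq> bot \<and> cj x y = bot)"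

text \<open>Normalized context; A and B are the (non-empty) types 'a and 'b.\<close>
definition normalized_context :: "('a \<Rightarrow> 'b \<Rightarrow> 'p::bot) \<Rightarrow> bool"
  where "normalized_context R \<longleftrightarrow>
    (\<forall>a. (\<exists>b1. R a b1 \<noteq> bot) \<and> (\<exists>b2. R a b2 = bot)) \<and>
    (\<forall>b. (\<exists>a1. R a1 b \<noteq> bot) \<and> (\<exists>a2. R a2 b = bot))"

definition nec_up ::
  "('k \<Rightarrow> 'l2 \<Rightarrow> 'p \<Rightarrow> 'l1::complete_lattice) \<Rightarrow> ('a \<Rightarrow> 'b \<Rightarrow> 'p) \<Rightarrow> ('a \<Rightarrow> 'b \<Rightarrow> 'k)
    \<Rightarrow> ('b \<Rightarrow> 'l2) \<Rightarrow> ('a \<Rightarrow> 'l1)"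
  where "nec_up swo R \<sigma>o g = (\<lambda>a. INF b. swo (\<sigma>o a b) (g b) (R a b))"

definition nec_down ::
  "('j \<Rightarrow> 'l1 \<Rightarrow> 'p \<Rightarrow> 'l2::complete_lattice) \<Rightarrow> ('a \<Rightarrow> 'b \<Rightarrow> 'p) \<Rightarrow> ('a \<Rightarrow> 'b \<Rightarrow> 'j)
    \<Rightarrow> ('a \<Rightarrow> 'l1) \<Rightarrow> ('b \<Rightarrow> 'l2)"
  where "nec_down nwp R \<sigma>p f = (\<lambda>b. INF a. nwp (\<sigma>p a b) (f a) (R a b))"

definition FN ::
  "('k \<Rightarrow> 'l2::complete_lattice \<Rightarrow> 'p \<Rightarrow> 'l1::complete_lattice) \<Rightarrow> ('j \<Rightarrow> 'l1 \<Rightarrow> 'p \<Rightarrow> 'l2)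
    \<Rightarrow> ('a \<Rightarrow> 'b \<Rightarrow> 'p) \<Rightarrow> ('a \<Rightarrow> 'b \<Rightarrow> 'j) \<Rightarrow> ('a \<Rightarrow> 'b \<Rightarrow> 'k)
    \<Rightarrow> (('b \<Rightarrow> 'l2) \<times> ('a \<Rightarrow> 'l1)) set"
  where "FN swo nwp R \<sigma>p \<sigma>o =
    {(g, f). nec_up swo R \<sigma>o g = f \<and> nec_down nwp R \<sigma>p f = g}"

definition chi :: "'x set \<Rightarrow> 'x \<Rightarrow> 'l::{bot,top}"
  where "chi X = (\<lambda>x. if x \<in> X then top else bot)"

definition FC ::
  "('k \<Rightarrow> 'l2::complete_lattice \<Rightarrow> 'p \<Rightarrow> 'l1::complete_lattice) \<Rightarrow> ('j \<Rightarrow> 'l1 \<Rightarrow> 'p \<Rightarrow> 'l2)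
    \<Rightarrow> ('a \<Rightarrow> 'b \<Rightarrow> 'p) \<Rightarrow> ('a \<Rightarrow> 'b \<Rightarrow> 'j) \<Rightarrow> ('a \<Rightarrow> 'b \<Rightarrow> 'k)
    \<Rightarrow> (('b \<Rightarrow> 'l2) \<times> ('a \<Rightarrow> 'l1)) set"
  where "FC swo nwp R \<sigma>p \<sigma>o =
    {(chi X, chi Y) | X Y. (chi X, chi Y) \<in> FN swo nwp R \<sigma>p \<sigma>o
        \<and> X \<noteq> {} \<and> X \<noteq> UNIV \<and> Y \<noteq> {} \<and> Y \<noteq> UNIV}"

end

theory Submission
  imports Defs
begin


lemma chi_out: "x \<notin> S \<Longrightarrow> chi S x = bot" unfolding chi_def by simp
lemma chi_in: "x \<in> S \<Longrightarrow> chi S x = top" unfolding chi_def by simp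

lemma swo_facts:
  assumes "adjoint_triple cj sw (nw::'l2::complete_lattice \<Rightarrow> 'l1::complete_lattice \<Rightarrow> 'p::{order_bot,order_top})"
    and "\<not> has_zero_divisors cj"
  shows "sw top p = top" "sw z bot = top" "p \<noteq> bot \<Longrightarrow> sw bot p = bot"
proof -
  have A: "\<And>x y z. (x \<le> sw z y \<longleftrightarrow> cj x y \<le> z) \<and> (cj x y \<le> z \<longleftrightarrow> y \<le> nw z x)"
    using assms(1) unfolding adjoint_triple_def by blast
  have "top \<le> sw top p" using A by simp
  then show "sw top p = top" by (simp add: top_unique)
  have "top \<le> sw z bot" using A[of top z bot] by simp
  then show "sw z bot = top" by (simp add: top_unique)
  assume p: "p \<noteq> bot"
  have "\<And>x. x \<le> sw bot p \<Longrightarrow> x = bot"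
  proof -
    fix x assume "x \<le> sw bot p"
    then have "cj x p = bot" using A[of x bot p] by (simp add: bot_unique)
    then show "x = bot" using assms(2) p unfolding has_zero_divisors_def by blast
  qed
  then show "sw bot p = bot" by blast
qed

lemma nwp_facts:
  assumes "adjoint_triple (cj::'p::{order_bot,order_top} \<Rightarrow> 'l2::complete_lattice \<Rightarrow> 'l1::complete_lattice) sw nw"
    and "\<not> has_zero_divisors cj"
  shows "nw top p = top" "nw z bot = top" "p \<noteq> bot \<Longrightarrow> nw bot p = bot"
proof -
  have A: "\<And>x y z. (x \<le> sw z y \<longleftrightarrow> cj x y \<le> z) \<and> (cj x y \<le> z \<longleftrightarrow> y \<le> nw z x)"
    using assms(1) unfolding adjoint_triple_def by blast
  have "top \<le> nw top p" using A[of p top top] by simp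
  then show "nw top p = top" by (simp add: top_unique)
  have "top \<le> nw z bot" using A[of bot z top] by auto
  then show "nw z bot = top" by (simp add: top_unique)
  assume p: "p \<noteq> bot"
  have "\<And>y. y \<le> nw bot p \<Longrightarrow> y = bot"
  proof -
    fix y assume "y \<le> nw bot p"
    then have "cj p y = bot" using A[of p bot y] by (simp add: bot_unique)
    then show "y = bot" using assms(2) p unfolding has_zero_divisors_def by blast
  qed
  then show "nw bot p = bot" by blast
qed

lemma up_chi:
  assumes "\<And>k. adjoint_triple (conjo k) (swo k) (nwo k :: 'l2::complete_lattice \<Rightarrow> 'l1::complete_lattice \<Rightarrow> 'p::{order_bot,order_top})"
    and "\<And>k. \<not> has_zero_divisors (conjo k)"
  shows "nec_up swo R \<sigma>o (chi X) = chi {a. \<forall>b. R a b \<noteq> bot \<longrightarrow> b \<in> X}"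
proof
  fix a
  note F = swo_facts[OF assms(1) assms(2)]
  show "nec_up swo R \<sigma>o (chi X) a = chi {a. \<forall>b. R a b \<noteq> bot \<longrightarrow> b \<in> X} a"
  proof (cases "\<forall>b. R a b \<noteq> bot \<longrightarrow> b \<in> X")
    case True
    have "swo (\<sigma>o a b) (chi X b) (R a b) = top" for b
    proof (cases "b \<in> X")
      case False
      then have "R a b = bot" using True by blast
      then show ?thesis using F by simp
    qed (simp add: chi_def F)
    then have "nec_up swo R \<sigma>o (chi X) a = top" unfolding nec_up_def by simp
    then show ?thesis using True by (subst chi_in) auto
  next
    case False
    then obtain b where b: "R a b \<noteq> bot" "b \<notin> X" by blast
    then have "swo (\<sigma>o a b) (chi X b) (R a b) = bot" using F unfolding chi_def by simp
    moreover have "nec_up swo R \<sigma>o (chi X) a \<le> swo (\<sigma>o a b) (chi X b) (R a b)"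
      unfolding nec_up_def by (rule INF_lower) simp
    ultimately have "nec_up swo R \<sigma>o (chi X) a = bot" by (simp add: bot_unique)
    then show ?thesis using False by (subst chi_out) auto
  qed
qed

lemma down_chi:
  assumes "\<And>j. adjoint_triple (conjp j) (swp j) (nwp j :: 'l1::complete_lattice \<Rightarrow> 'p::{order_bot,order_top} \<Rightarrow> 'l2::complete_lattice)"
    and "\<And>j. \<not> has_zero_divisors (conjp j)"
  shows "nec_down nwp R \<sigma>p (chi Y) = chi {b. \<forall>a. R a b \<noteq> bot \<longrightarrow> a \<in> Y}"
proof
  fix b
  note F = nwp_facts[OF assms(1) assms(2)]
  show "nec_down nwp R \<sigma>p (chi Y) b = chi {b. \<forall>a. R a b \<noteq> bot \<longrightarrow> a \<in> Y} b"
  proof (cases "\<forall>a. R a b \<noteq> bot \<longrightarrow> a \<in> Y")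
    case True
    have "nwp (\<sigma>p a b) (chi Y a) (R a b) = top" for a
    proof (cases "a \<in> Y")
      case False
      then have "R a b = bot" using True by blast
      then show ?thesis using F by simp
    qed (simp add: chi_def F)
    then have "nec_down nwp R \<sigma>p (chi Y) b = top" unfolding nec_down_def by simp
    then show ?thesis using True by (subst chi_in) auto
  next
    case False
    then obtain a where a: "R a b \<noteq> bot" "a \<notin> Y" by blast
    then have "nwp (\<sigma>p a b) (chi Y a) (R a b) = bot" using F unfolding chi_def by simp
    moreover have "nec_down nwp R \<sigma>p (chi Y) b \<le> nwp (\<sigma>p a b) (chi Y a) (R a b)"
      unfolding nec_down_def by (rule INF_lower) simp
    ultimately have "nec_down nwp R \<sigma>p (chi Y) b = bot" by (simp add: bot_unique)
    then show ?thesis using False by (subst chi_out) auto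
  qed
qed

lemma chi_inj:
  assumes "(top::'l::complete_lattice) \<noteq> bot" "(chi S :: 'x \<Rightarrow> 'l) = chi T"
  shows "S = T"
proof (rule set_eqI)
  fix x
  have "chi S x = (chi T x :: 'l)" using assms(2) by simp
  then show "x \<in> S \<longleftrightarrow> x \<in> T" using assms(1) unfolding chi_def
    by (cases "x \<in> S"; cases "x \<in> T") (simp_all add: eq_commute)
qed

theorem mainTheorem7:
  fixes cj :: "'i::finite \<Rightarrow> 'l1::complete_lattice \<Rightarrow> 'l2::complete_lattice \<Rightarrow> 'p::{order_bot,order_top}"
    and sw :: "'i \<Rightarrow> 'p \<Rightarrow> 'l2 \<Rightarrow> 'l1"
    and nw :: "'i \<Rightarrow> 'p \<Rightarrow> 'l1 \<Rightarrow> 'l2"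
    and conjp :: "'j::finite \<Rightarrow> 'p \<Rightarrow> 'l2 \<Rightarrow> 'l1"
    and swp :: "'j \<Rightarrow> 'l1 \<Rightarrow> 'l2 \<Rightarrow> 'p"
    and nwp :: "'j \<Rightarrow> 'l1 \<Rightarrow> 'p \<Rightarrow> 'l2"
    and conjo :: "'k::finite \<Rightarrow> 'l1 \<Rightarrow> 'p \<Rightarrow> 'l2"
    and swo :: "'k \<Rightarrow> 'l2 \<Rightarrow> 'p \<Rightarrow> 'l1"
    and nwo :: "'k \<Rightarrow> 'l2 \<Rightarrow> 'l1 \<Rightarrow> 'p"
    and R :: "'a \<Rightarrow> 'b \<Rightarrow> 'p"
    and \<sigma> :: "'a \<Rightarrow> 'b \<Rightarrow> 'i"
    and \<sigma>p :: "'a \<Rightarrow> 'b \<Rightarrow> 'j"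
    and \<sigma>o :: "'a \<Rightarrow> 'b \<Rightarrow> 'k"
    and X :: "'b set" and Y :: "'a set"
  assumes multif: "\<And>i. adjoint_triple (cj i) (sw i) (nw i)"
    and propf: "\<And>j. adjoint_triple (conjp j) (swp j) (nwp j)"
    and objf: "\<And>k. adjoint_triple (conjo k) (swo k) (nwo k)"
    and nzd: "\<And>i. \<not> has_zero_divisors (cj i)"
    and nzdp: "\<And>j. \<not> has_zero_divisors (conjp j)"
    and nzdo: "\<And>k. \<not> has_zero_divisors (conjo k)"
    and norm: "normalized_context R"
    and XY: "(chi X, chi Y) \<in> FC swo nwp R \<sigma>p \<sigma>o"
    and X: "X \<noteq> {}" "X \<noteq> UNIV"
    and Y: "Y \<noteq> {}" "Y \<noteq> UNIV"
  shows "(chi (- X), chi (- Y)) \<in> FC swo nwp R \<sigma>p \<sigma>o"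
proof -
  note U = up_chi[OF objf nzdo, where R=R and \<sigma>o=\<sigma>o]
  note D = down_chi[OF propf nzdp, where R=R and \<sigma>p=\<sigma>p]
  have FN: "(chi X, chi Y) \<in> FN swo nwp R \<sigma>p \<sigma>o"
    using XY unfolding FC_def mem_Collect_eq by (elim exE conjE) simp
  then have e1: "chi {a. \<forall>b. R a b \<noteq> bot \<longrightarrow> b \<in> X} = (chi Y :: 'a \<Rightarrow> 'l1)"
    and e2: "chi {b. \<forall>a. R a b \<noteq> bot \<longrightarrow> a \<in> Y} = (chi X :: 'b \<Rightarrow> 'l2)"
    using FN unfolding FN_def by (simp_all add: U D)
  obtain a0 b0 where ab: "R a0 b0 \<noteq> bot" using norm unfolding normalized_context_def by blast
  have n1: "nwp (\<sigma>p a0 b0) top (R a0 b0) = top" "nwp (\<sigma>p a0 b0) bot (R a0 b0) = bot"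
    using nwp_facts[OF propf nzdp] ab by auto
  have n2: "swo (\<sigma>o a0 b0) top (R a0 b0) = top" "swo (\<sigma>o a0 b0) bot (R a0 b0) = bot"
    using swo_facts[OF objf nzdo] ab by auto
  have triv: "(top::'l1) = bot \<longleftrightarrow> (top::'l2) = bot"
  proof
    assume "(top::'l1) = bot" then show "(top::'l2) = bot" using n1 by simp
  next
    assume "(top::'l2) = bot" then show "(top::'l1) = bot" using n2 by simp
  qed
  have FN2: "(chi (- X), chi (- Y)) \<in> FN swo nwp R \<sigma>p \<sigma>o"
  proof (cases "(top::'l1) = bot")
    case True
    then have t2: "(top::'l2) = bot" using triv by simp
    have "\<And>f g :: 'a \<Rightarrow> 'l1. f = g" proof (rule ext)
      fix f g :: "'a \<Rightarrow> 'l1" and x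
      have "f x \<le> top" "g x \<le> top" by simp_all
      then show "f x = g x" using True by (simp add: bot_unique)
    qed
    moreover have "\<And>f g :: 'b \<Rightarrow> 'l2. f = g" proof (rule ext)
      fix f g :: "'b \<Rightarrow> 'l2" and x
      have "f x \<le> top" "g x \<le> top" by simp_all
      then show "f x = g x" using t2 by (simp add: bot_unique)
    qed
    ultimately show ?thesis unfolding FN_def by blast
  next
    case False
    then have t2: "(top::'l2) \<noteq> bot" using triv by simp
    have Yd: "Y = {a. \<forall>b. R a b \<noteq> bot \<longrightarrow> b \<in> X}" using chi_inj[OF False e1] by simp
    have Xd: "X = {b. \<forall>a. R a b \<noteq> bot \<longrightarrow> a \<in> Y}" using chi_inj[OF t2 e2] by simp
    have Ym: "a \<in> Y \<longleftrightarrow> (\<forall>b. R a b \<noteq> bot \<longrightarrow> b \<in> X)" for a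
      by (subst Yd) simp
    have Xm: "b \<in> X \<longleftrightarrow> (\<forall>a. R a b \<noteq> bot \<longrightarrow> a \<in> Y)" for b
      by (subst Xd) simp
    have s1: "{a. \<forall>b. R a b \<noteq> bot \<longrightarrow> b \<notin> X} = - Y"
    proof (rule set_eqI, rule iffI)
      fix a assume "a \<in> {a. \<forall>b. R a b \<noteq> bot \<longrightarrow> b \<notin> X}"
      moreover obtain b where "R a b \<noteq> bot" using norm unfolding normalized_context_def by blast
      ultimately show "a \<in> - Y" using Ym by blast
    next
      fix a assume "a \<in> - Y"
      then show "a \<in> {a. \<forall>b. R a b \<noteq> bot \<longrightarrow> b \<notin> X}"
        using Xm Ym by blast
    qed
    have s2: "{b. \<forall>a. R a b \<noteq> bot \<longrightarrow> a \<notin> Y} = - X"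
    proof (rule set_eqI, rule iffI)
      fix b assume "b \<in> {b. \<forall>a. R a b \<noteq> bot \<longrightarrow> a \<notin> Y}"
      moreover obtain a where "R a b \<noteq> bot" using norm unfolding normalized_context_def by blast
      ultimately show "b \<in> - X" using Xm by blast
    next
      fix b assume "b \<in> - X"
      then show "b \<in> {b. \<forall>a. R a b \<noteq> bot \<longrightarrow> a \<notin> Y}"
        using Xm Ym by blast
    qed
    show ?thesis unfolding FN_def by (simp add: U D s1 s2)
  qed
  show ?thesis unfolding FC_def
    apply (rule CollectI, rule exI[of _ "- X"], rule exI[of _ "- Y"])
    using FN2 X Y by auto
qed

end
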